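(* (Unconditional stability of the one-dimensional Crank–Nicolson collocation scheme.) Let $\mathcal A$ be the one-dimensional piecewise quadratic collocation matrix (see context) for $a<b$, $\gamma\in(0,1)$, $M\ge2$. Let $T>0$, $N\ge1$, $\tau=T/N$, and set $C_a=\frac{2(b-a)^{1-\gamma}}{1-\gamma}$. If vectors $\varepsilon^0,\varepsilon^1,\dots,\varepsilon^N\in\mathbb R^{2M-1}$ satisfy $$\Big(I+\frac{\tau}{2}\mathcal A\Big)\varepsilon^k=\Big(I-\frac{\tau}{2}\mathcal A\Big)\varepsilon^{k-1},\qquad k=1,\dots,N,$$ then $\|\varepsilon^k\|_\infty\le e^{TC_a}\|\varepsilon^0\|_\infty$ for all $k=0,1,\dots,N$. (In particular, the difference of two solutions of the scheme with the same data but different initial values is bounded in this way, for every $M$ and every $\tau$.)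
   Context: Fix real numbers $a<b$, an exponent $\gamma\in(0,1)$ and an integer $M\ge 2$. Set $h=(b-a)/M$ and $x_s=a+sh$ for $s\in\{0,\tfrac12,1,\tfrac32,\dots,M\}$. The piecewise quadratic Lagrange basis functions on $[a,b]$ are: for integers $0\le l\le M$, $\phi_l(x)=\frac{x-x_{l-1}}{h}\cdot\frac{2x-(x_l+x_{l-1})}{h}$ for $x\in[x_{l-1},x_l]\cap[a,b]$, $\phi_l(x)=\frac{x_{l+1}-x}{h}\cdot\frac{(x_{l+1}+x_l)-2x}{h}$ for $x\in[x_l,x_{l+1}]\cap[a,b]$, and $\phi_l(x)=0$ otherwise; and for $l=1,\dots,M$, $\phi_{l-\frac12}(x)=\frac{4(x-x_{l-1})(x_l-x)}{h^2}$ for $x\in[x_{l-1},x_l]$ and $0$ otherwise. For $i\in\{1,\dots,2M-1\}$ and $j\in\{0,1,\dots,2M\}$ define $$d_i=\int_a^b\frac{dy}{|x_{i/2}-y|^{\gamma}},\qquad g_{ij}=\int_a^b\frac{\phi_{j/2}(y)}{|x_{i/2}-y|^{\gamma}}\,dy .$$ The one-dimensional collocation matrix is the $(2M-1)\times(2M-1)$ matrix $\mathcal A$ with entries $A_{ij}=\delta_{ij}d_i-g_{ij}$, $i,j\in\{1,\dots,2M-1\}$. The following fact, established in earlier work, may be used: $g_{ij}>0$ for all $i,j\in\{1,\dots,2M-1\}$, and $\mathcal A$ is strictly diagonally dominant by rows. For a vector $v$, $\|v\|_\infty=\max_i|v_i|$. *)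

theory Defs
  imports "HOL-Analysis.Analysis"
begin

text \<open>Mesh: h = (b-a)/M, x_s = a + s h. We write nodes with half-integer index s = i/2
  as xnode a b M i = a + i h / 2 (i a natural number).\<close>

definition hstep :: "real \<Rightarrow> real \<Rightarrow> nat \<Rightarrow> real" where
  "hstep a b M = (b - a) / real M"

definition xnode :: "real \<Rightarrow> real \<Rightarrow> nat \<Rightarrow> nat \<Rightarrow> real" where
  "xnode a b M i = a + real i * hstep a b M / 2"

definition phi_int :: "real \<Rightarrow> real \<Rightarrow> nat \<Rightarrow> nat \<Rightarrow> real \<Rightarrow> real" where
  "phi_int a b M l x =
     (let h = hstep a b M; xl = a + real l * h; xm = xl - h; xp = xl + h in
      if x \<in> {xm..xl} \<inter> {a..b} then ((x - xm) / h) * ((2 * x - (xl + xm)) / h)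
      else if x \<in> {xl..xp} \<inter> {a..b} then ((xp - x) / h) * (((xp + xl) - 2 * x) / h)
      else 0)"

text \<open>Midpoint basis function phi_{l-1/2}, l = 1..M.\<close>
definition phi_mid :: "real \<Rightarrow> real \<Rightarrow> nat \<Rightarrow> nat \<Rightarrow> real \<Rightarrow> real" where
  "phi_mid a b M l x =
     (let h = hstep a b M; xl = a + real l * h; xm = xl - h in
      if x \<in> {xm..xl} then 4 * (x - xm) * (xl - x) / h\<^sup>2 else 0)"

text \<open>phi_{j/2} for j = 0..2M.\<close>
definition phi_half :: "real \<Rightarrow> real \<Rightarrow> nat \<Rightarrow> nat \<Rightarrow> real \<Rightarrow> real" where
  "phi_half a b M j = (if even j then phi_int a b M (j div 2) else phi_mid a b M ((j + 1) div 2))"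

definition d_coef :: "real \<Rightarrow> real \<Rightarrow> real \<Rightarrow> nat \<Rightarrow> nat \<Rightarrow> real" where
  "d_coef a b \<gamma> M i = integral {a..b} (\<lambda>y. 1 / \<bar>xnode a b M i - y\<bar> powr \<gamma>)"

definition g_coef :: "real \<Rightarrow> real \<Rightarrow> real \<Rightarrow> nat \<Rightarrow> nat \<Rightarrow> nat \<Rightarrow> real" where
  "g_coef a b \<gamma> M i j = integral {a..b} (\<lambda>y. phi_half a b M j y / \<bar>xnode a b M i - y\<bar> powr \<gamma>)"

definition coll_A :: "real \<Rightarrow> real \<Rightarrow> real \<Rightarrow> nat \<Rightarrow> nat \<Rightarrow> nat \<Rightarrow> real" where
  "coll_A a b \<gamma> M i j = (if i = j then d_coef a b \<gamma> M i else 0) - g_coef a b \<gamma> M i j"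

definition supnorm :: "nat \<Rightarrow> (nat \<Rightarrow> real) \<Rightarrow> real" where
  "supnorm n v = Max ((\<lambda>i. \<bar>v i\<bar>) ` {1..n})"

end

theory Submission
  imports Defs
begin


definition wt :: "real \<Rightarrow> real \<Rightarrow> real \<Rightarrow> real" where
  "wt \<gamma> x y = 1 / \<bar>x - y\<bar> powr \<gamma>"

lemma int_right:
  fixes x p q \<gamma> :: real and k :: nat
  assumes "x \<le> p" "p \<le> q" "0 < \<gamma>" "\<gamma> < 1"
  shows "((\<lambda>y. (y - x)^k * wt \<gamma> x y) has_integral
           ((q - x) powr (real k + 1 - \<gamma>) - (p - x) powr (real k + 1 - \<gamma>)) / (real k + 1 - \<gamma>)) {p..q}"
proof -
  define e where "e = real k + 1 - \<gamma>"
  have e: "e > 0" using assms by (simp add: e_def)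
  have "((\<lambda>y. (y - x)^k * wt \<gamma> x y) has_integral
       ((\<lambda>y. (y - x) powr e / e) q - (\<lambda>y. (y - x) powr e / e) p)) {p..q}"
  proof (rule fundamental_theorem_of_calculus_interior[OF assms(2)])
    show "continuous_on {p..q} (\<lambda>y. (y - x) powr e / e)"
      using assms e by (intro continuous_intros continuous_on_powr') auto
  next
    fix y assume y: "y \<in> {p<..<q}"
    then have yx: "y - x > 0" using assms by auto
    have "((\<lambda>y. (y - x) powr e / e) has_real_derivative (e * (y - x) powr (e - 1) * 1) / e) (at y)"
      using yx e by (intro derivative_eq_intros) auto
    moreover have "(e * (y - x) powr (e - 1) * 1) / e = (y - x)^k * wt \<gamma> x y"
    proof -
      have "(y - x) powr (e - 1) = (y - x) powr (real k) / (y - x) powr \<gamma>"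
        using yx by (simp add: e_def powr_diff)
      also have "\<dots> = (y - x)^k * wt \<gamma> x y"
        using yx by (simp add: powr_realpow wt_def abs_minus_commute)
      finally show ?thesis using e by simp
    qed
    ultimately show "((\<lambda>y. (y - x) powr e / e) has_vector_derivative (y - x)^k * wt \<gamma> x y) (at y)"
      by (simp add: has_real_derivative_iff_has_vector_derivative)
  qed
  then show ?thesis by (simp add: e_def diff_divide_distrib)
qed

lemma int_left:
  fixes x p q \<gamma> :: real and k :: nat
  assumes "q \<le> x" "p \<le> q" "0 < \<gamma>" "\<gamma> < 1"
  shows "((\<lambda>y. (y - x)^k * wt \<gamma> x y) has_integral
           (-1)^k * ((x - p) powr (real k + 1 - \<gamma>) - (x - q) powr (real k + 1 - \<gamma>)) / (real k + 1 - \<gamma>)) {p..q}"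
proof -
  define e where "e = real k + 1 - \<gamma>"
  have e: "e > 0" using assms by (simp add: e_def)
  define F where "F = (\<lambda>y. - ((-1)^k * (x - y) powr e / e))"
  have "((\<lambda>y. (y - x)^k * wt \<gamma> x y) has_integral (F q - F p)) {p..q}"
  proof (rule fundamental_theorem_of_calculus_interior[OF assms(2)])
    show "continuous_on {p..q} F"
      using assms e unfolding F_def by (intro continuous_intros continuous_on_powr') auto
  next
    fix y assume y: "y \<in> {p<..<q}"
    then have yx: "x - y > 0" using assms by auto
    have "(F has_real_derivative - ((-1)^k * (e * (x - y) powr (e - 1) * (0 - 1)) / e)) (at y)"
      unfolding F_def using yx e by (intro derivative_eq_intros) auto
    moreover have "- ((-1)^k * (e * (x - y) powr (e - 1) * (0 - 1)) / e) = (y - x)^k * wt \<gamma> x y"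
    proof -
      have "(x - y) powr (e - 1) = (x - y) powr (real k) / (x - y) powr \<gamma>"
        using yx by (simp add: e_def powr_diff)
      also have "\<dots> = (x - y)^k * wt \<gamma> x y"
        using yx by (simp add: powr_realpow wt_def)
      finally have "(x - y) powr (e - 1) = (x - y)^k * wt \<gamma> x y" .
      moreover have "(-1)^k * (x - y)^k = ((y - x)^k :: real)"
        by (simp add: power_mult_distrib[symmetric])
      ultimately show ?thesis using e by (simp add: field_simps)
    qed
    ultimately show "(F has_vector_derivative (y - x)^k * wt \<gamma> x y) (at y)"
      by (simp add: has_real_derivative_iff_has_vector_derivative)
  qed
  then show ?thesis by (simp add: F_def e_def diff_divide_distrib right_diff_distrib)
qed



lemma int_mid:
  fixes x p q \<gamma> :: real and k :: nat
  assumes "p \<le> x" "x \<le> q" "0 < \<gamma>" "\<gamma> < 1"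
  shows "((\<lambda>y. (y - x)^k * wt \<gamma> x y) has_integral
           ((-1)^k * (x - p) powr (real k + 1 - \<gamma>) + (q - x) powr (real k + 1 - \<gamma>)) / (real k + 1 - \<gamma>)) {p..q}"
proof -
  have e: "real k + 1 - \<gamma> \<noteq> 0" using assms by simp
  have 1: "((\<lambda>y. (y - x)^k * wt \<gamma> x y) has_integral
           (-1)^k * ((x - p) powr (real k + 1 - \<gamma>) - (x - x) powr (real k + 1 - \<gamma>)) / (real k + 1 - \<gamma>)) {p..x}"
    by (rule int_left) (use assms in auto)
  have 2: "((\<lambda>y. (y - x)^k * wt \<gamma> x y) has_integral
           ((q - x) powr (real k + 1 - \<gamma>) - (x - x) powr (real k + 1 - \<gamma>)) / (real k + 1 - \<gamma>)) {x..q}"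
    by (rule int_right) (use assms in auto)
  from has_integral_combine[OF assms(1,2) 1 2] show ?thesis
    by (simp add: add_divide_distrib)
qed

lemma int_any:
  fixes x p q \<gamma> :: real and k :: nat
  assumes "p \<le> q" "0 < \<gamma>" "\<gamma> < 1"
  shows "(\<lambda>y. (y - x)^k * wt \<gamma> x y) integrable_on {p..q}"
proof (cases "x \<le> p")
  case True
  then show ?thesis using int_right[OF True assms(1-3)] by blast
next
  case False
  show ?thesis
  proof (cases "q \<le> x")
    case True
    then show ?thesis using int_left[OF True assms(1-3)] by blast
  next
    case False
    then show ?thesis using int_mid[of p x q \<gamma> k] \<open>\<not> x \<le> p\<close> assms by auto
  qed
qed

lemma quad_integrable:
  fixes x p q \<gamma> \<alpha> \<beta> \<delta> :: real
  assumes "p \<le> q" "0 < \<gamma>" "\<gamma> < 1"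
  shows "(\<lambda>y. (\<alpha> * y^2 + \<beta> * y + \<delta>) * wt \<gamma> x y) integrable_on {p..q}"
proof -
  have i: "\<And>k. (\<lambda>y. (y - x)^k * wt \<gamma> x y) integrable_on {p..q}"
    by (rule int_any[OF assms])
  have "(\<lambda>y. \<alpha> * ((y - x)^2 * wt \<gamma> x y) + (2*\<alpha>*x+\<beta>) * ((y - x)^1 * wt \<gamma> x y)
           + (\<alpha>*x^2+\<beta>*x+\<delta>) * ((y - x)^0 * wt \<gamma> x y)) integrable_on {p..q}"
    by (intro integrable_add integrable_on_cmult_left[where 'b=real, simplified] i)
  then show ?thesis
    by (rule integrable_eq) (simp add: power2_eq_square algebra_simps)
qed

lemma mid_quad:
  fixes x p q \<gamma> A B :: real
  assumes "p \<le> x" "x \<le> q" "0 < \<gamma>" "\<gamma> < 1"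
  shows "((\<lambda>y. (A * (y - x)^2 + B * (y - x)) * wt \<gamma> x y) has_integral
      A * (((x - p) powr (3 - \<gamma>) + (q - x) powr (3 - \<gamma>)) / (3 - \<gamma>))
    + B * (((q - x) powr (2 - \<gamma>) - (x - p) powr (2 - \<gamma>)) / (2 - \<gamma>))) {p..q}"
proof -
  have 2: "((\<lambda>y. (y - x)^2 * wt \<gamma> x y) has_integral
      ((x - p) powr (3 - \<gamma>) + (q - x) powr (3 - \<gamma>)) / (3 - \<gamma>)) {p..q}"
    using int_mid[OF assms, of 2] by (simp add: numeral_eq_Suc)
  have 1: "((\<lambda>y. (y - x)^1 * wt \<gamma> x y) has_integral
      ((q - x) powr (2 - \<gamma>) - (x - p) powr (2 - \<gamma>)) / (2 - \<gamma>)) {p..q}"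
    using int_mid[OF assms, of 1] by simp
  from has_integral_add[OF has_integral_mult_right[OF 2, of A] has_integral_mult_right[OF 1, of B]]
  show ?thesis
    by (rule has_integral_eq[rotated]) (simp add: algebra_simps)
qed



definition qL :: "real \<Rightarrow> real \<Rightarrow> real \<Rightarrow> real" where
  "qL c h y = (y - c) * (2*y - 2*c - h) / h^2"
definition qR :: "real \<Rightarrow> real \<Rightarrow> real \<Rightarrow> real" where
  "qR c h y = (c + h - y) * (2*c + h - 2*y) / h^2"

lemma qL_integrable:
  assumes "p \<le> q" "0 < \<gamma>" "\<gamma> < 1" "h > 0"
  shows "(\<lambda>y. qL c h y * wt \<gamma> x y) integrable_on {p..q}"
  by (rule integrable_eq[OF quad_integrable[OF assms(1-3), of "2/h^2" "-(4*c+h)/h^2" "c*(2*c+h)/h^2" x]])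
     (use assms in \<open>simp add: qL_def field_simps power2_eq_square\<close>)

lemma qR_integrable:
  assumes "p \<le> q" "0 < \<gamma>" "\<gamma> < 1" "h > 0"
  shows "(\<lambda>y. qR c h y * wt \<gamma> x y) integrable_on {p..q}"
  by (rule integrable_eq[OF quad_integrable[OF assms(1-3), of "2/h^2" "-(4*c+3*h)/h^2" "(c+h)*(2*c+h)/h^2" x]])
     (use assms in \<open>simp add: qR_def field_simps power2_eq_square\<close>)

lemma qL_poly:
  assumes "h > 0"
  shows "(qL c h has_integral h / 6) {c..c+h}"
proof -
  define G where "G = (\<lambda>y. (y - c)^2 * (4*(y - c) - 3*h) / (6*h^2))"
  have "(qL c h has_integral G (c+h) - G c) {c..c+h}"
  proof (rule fundamental_theorem_of_calculus_interior)
    show "continuous_on {c..c+h} G" unfolding G_def using assms by (intro continuous_intros) auto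
  next
    fix y
    have "(G has_real_derivative qL c h y) (at y)"
      unfolding G_def using assms
      by (auto intro!: derivative_eq_intros simp: qL_def field_simps power2_eq_square)
    then show "(G has_vector_derivative qL c h y) (at y)"
      by (simp add: has_real_derivative_iff_has_vector_derivative)
  qed (use assms in auto)
  moreover have "G (c+h) - G c = h / 6" using assms by (simp add: G_def field_simps power2_eq_square)
  ultimately show ?thesis by simp
qed

lemma qR_poly:
  assumes "h > 0"
  shows "(qR c h has_integral h / 6) {c..c+h}"
proof -
  define G where "G = (\<lambda>y. - ((c + h - y)^2 * (4*(c + h - y) - 3*h) / (6*h^2)))"
  have "(qR c h has_integral G (c+h) - G c) {c..c+h}"
  proof (rule fundamental_theorem_of_calculus_interior)
    show "continuous_on {c..c+h} G" unfolding G_def using assms by (intro continuous_intros) auto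
  next
    fix y
    have "(G has_real_derivative qR c h y) (at y)"
      unfolding G_def using assms
      by (auto intro!: derivative_eq_intros simp: qR_def field_simps power2_eq_square)
    then show "(G has_vector_derivative qR c h y) (at y)"
      by (simp add: has_real_derivative_iff_has_vector_derivative)
  qed (use assms in auto)
  moreover have "G (c+h) - G c = h / 6" using assms by (simp add: G_def field_simps power2_eq_square)
  ultimately show ?thesis by simp
qed

lemma int_ge_open:
  fixes f g :: "real \<Rightarrow> real"
  assumes "f integrable_on {p..q}" "g integrable_on {p..q}"
    and "\<And>y. p < y \<Longrightarrow> y < q \<Longrightarrow> g y \<le> f y"
  shows "integral {p..q} g \<le> integral {p..q} f"
proof -
  define f' where "f' = (\<lambda>y. if y \<in> {p<..<q} then f y else g y)"
  have neg: "negligible {p, q}" by auto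
  have eq: "\<And>y. y \<in> {p..q} - {p,q} \<Longrightarrow> f y = f' y" by (auto simp: f'_def)
  have "integral {p..q} f = integral {p..q} f'"
    by (rule integral_spike[OF neg]) (simp add: eq)
  moreover have "f' integrable_on {p..q}"
    by (rule integrable_spike[OF assms(1) neg]) (simp add: eq)
  moreover have "integral {p..q} g \<le> integral {p..q} f'"
    by (rule integral_le[OF assms(2) \<open>f' integrable_on _\<close>]) (auto simp: f'_def assms(3))
  ultimately show ?thesis by simp
qed

lemma sign_mul:
  fixes q w K :: real
  assumes "(q \<le> 0 \<and> w \<le> K) \<or> (0 \<le> q \<and> K \<le> w)"
  shows "K * q \<le> q * w"
proof -
  have "0 \<le> q * (w - K)" using assms by (auto intro: mult_nonpos_nonpos mult_nonneg_nonneg)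
  then show ?thesis by (simp add: algebra_simps)
qed

lemma wpow_le:
  fixes A B C D \<gamma> :: real
  assumes "0 < A" "0 < B" "0 < C" "0 < D" "A * D \<le> C * B" "0 \<le> \<gamma>"
  shows "1 / B powr \<gamma> \<le> (C powr \<gamma> / A powr \<gamma>) * (1 / D powr \<gamma>)"
proof -
  have "(A * D) powr \<gamma> \<le> (C * B) powr \<gamma>"
    using assms by (intro powr_mono2) auto
  then have "A powr \<gamma> * D powr \<gamma> \<le> C powr \<gamma> * B powr \<gamma>"
    using assms by (simp add: powr_mult)
  then show ?thesis using assms by (simp add: field_simps)
qed

lemma wpow_ge:
  fixes A B C D \<gamma> :: real
  assumes "0 < A" "0 < B" "0 < C" "0 < D" "C * B \<le> A * D" "0 \<le> \<gamma>"
  shows "(C powr \<gamma> / A powr \<gamma>) * (1 / D powr \<gamma>) \<le> 1 / B powr \<gamma>"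
proof -
  have "(C * B) powr \<gamma> \<le> (A * D) powr \<gamma>"
    using assms by (intro powr_mono2) auto
  then have "C powr \<gamma> * B powr \<gamma> \<le> A powr \<gamma> * D powr \<gamma>"
    using assms by (simp add: powr_mult)
  then show ?thesis using assms by (simp add: field_simps)
qed

lemma inv_powr_anti:
  fixes s t \<gamma> :: real
  assumes "0 < s" "s \<le> t" "0 \<le> \<gamma>"
  shows "1 / t powr \<gamma> \<le> 1 / s powr \<gamma>"
proof -
  have "s powr \<gamma> \<le> t powr \<gamma>" using assms by (intro powr_mono2) auto
  then show ?thesis using assms by (simp add: field_simps)
qed



lemma cellL_c:
  assumes "h > 0" "0 < \<gamma>" "\<gamma> < 1"
  shows "0 \<le> integral {c..c+h} (\<lambda>y. qL c h y * wt \<gamma> c y)"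
proof -
  define P where "P = h powr (2 - \<gamma>)"
  have P: "P > 0" using assms by (simp add: P_def)
  have d: "3 - \<gamma> \<noteq> 0" "2 - \<gamma> \<noteq> 0" using assms by auto
  have h3: "h powr (3 - \<gamma>) = h * P"
    using assms powr_add[of h 1 "2 - \<gamma>"] by (simp add: P_def)
  have I: "((\<lambda>y. (2/h^2 * (y - c)^2 + (-1/h) * (y - c)) * wt \<gamma> c y) has_integral
      2/h^2 * (((c - c) powr (3 - \<gamma>) + (c + h - c) powr (3 - \<gamma>)) / (3 - \<gamma>))
    + (-1/h) * (((c + h - c) powr (2 - \<gamma>) - (c - c) powr (2 - \<gamma>)) / (2 - \<gamma>))) {c..c+h}"
    by (rule mid_quad) (use assms in auto)
  have I': "((\<lambda>y. qL c h y * wt \<gamma> c y) has_integral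
      2/h^2 * ((h * P) / (3 - \<gamma>)) + (-1/h) * (P / (2 - \<gamma>))) {c..c+h}"
    by (rule has_integral_eq[OF _ has_integral_eq_rhs[OF I]])
      (use assms in \<open>simp_all add: qL_def field_simps power2_eq_square h3 P_def\<close>)
  have "2/h^2 * ((h * P) / (3 - \<gamma>)) + (-1/h) * (P / (2 - \<gamma>)) = P / h * (2/(3 - \<gamma>) - 1/(2 - \<gamma>))"
  proof -
    have "2/h^2 * ((h * P) / (3 - \<gamma>)) = P/h * (2/(3-\<gamma>))"
      using assms by (simp add: power2_eq_square)
    moreover have "(-1/h) * (P / (2 - \<gamma>)) = - (P/h * (1/(2-\<gamma>)))" by simp
    ultimately show ?thesis by (simp add: right_diff_distrib)
  qed
  moreover have "2/(3 - \<gamma>) - 1/(2 - \<gamma>) \<ge> 0"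
  proof -
    have "2/(3 - \<gamma>) - 1/(2 - \<gamma>) = (1 - \<gamma>) / ((3 - \<gamma>) * (2 - \<gamma>))"
      using d by (simp add: field_simps)
    moreover have "0 \<le> (1 - \<gamma>) / ((3 - \<gamma>) * (2 - \<gamma>))"
      using assms by (intro divide_nonneg_pos mult_pos_pos) auto
    ultimately show ?thesis by simp
  qed
  ultimately have "0 \<le> 2/h^2 * ((h * P) / (3 - \<gamma>)) + (-1/h) * (P / (2 - \<gamma>))"
    using P assms by simp
  with I' show ?thesis by (simp add: integral_unique)
qed

lemma cellL_m:
  assumes "h > 0" "0 < \<gamma>" "\<gamma> < 1" "x = c + h/2"
  shows "0 \<le> integral {c..c+h} (\<lambda>y. qL c h y * wt \<gamma> x y)"
proof -
  have e1: "x - c = h/2" "c + h - x = h/2" using assms by auto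
  have I: "((\<lambda>y. (2/h^2 * (y - x)^2 + (1/h) * (y - x)) * wt \<gamma> x y) has_integral
      2/h^2 * (((x - c) powr (3 - \<gamma>) + (c + h - x) powr (3 - \<gamma>)) / (3 - \<gamma>))
    + (1/h) * (((c + h - x) powr (2 - \<gamma>) - (x - c) powr (2 - \<gamma>)) / (2 - \<gamma>))) {c..c+h}"
    by (rule mid_quad) (use assms in auto)
  have I': "((\<lambda>y. qL c h y * wt \<gamma> x y) has_integral
      2/h^2 * (((h/2) powr (3 - \<gamma>) + (h/2) powr (3 - \<gamma>)) / (3 - \<gamma>))) {c..c+h}"
    by (rule has_integral_eq[OF _ has_integral_eq_rhs[OF I]])
      (use assms in \<open>simp_all add: qL_def field_simps power2_eq_square e1\<close>)
  have "0 \<le> 2/h^2 * (((h/2) powr (3 - \<gamma>) + (h/2) powr (3 - \<gamma>)) / (3 - \<gamma>))"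
    using assms by simp
  with I' show ?thesis by (simp add: integral_unique)
qed

lemma cellL:
  assumes "h > 0" "0 < \<gamma>" "\<gamma> < 1" "x \<le> c \<or> x = c + h/2 \<or> c + h \<le> x"
  shows "0 \<le> integral {c..c+h} (\<lambda>y. qL c h y * wt \<gamma> x y)"
proof -
  define m where "m = c + h/2"
  have ix: "(\<lambda>y. qL c h y * wt \<gamma> x y) integrable_on {c..c+h}"
    by (rule qL_integrable) (use assms in auto)
  have qneg: "qL c h y \<le> 0" if "c \<le> y" "y \<le> m" for y
  proof -
    have "(y - c) * (2*y - 2*c - h) \<le> 0"
      using that by (intro mult_nonneg_nonpos) (auto simp: m_def)
    then show ?thesis unfolding qL_def by (rule divide_nonpos_nonneg) simp
  qed
  have qpos: "0 \<le> qL c h y" if "c \<le> y" "m \<le> y" for y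
  proof -
    have "0 \<le> (y - c) * (2*y - 2*c - h)"
      using that by (intro mult_nonneg_nonneg) (auto simp: m_def)
    then show ?thesis unfolding qL_def by simp
  qed
  consider "x \<le> c" | "x = c + h/2" | "c + h \<le> x" using assms(4) by blast
  then show ?thesis
  proof cases
    case 1
    define K where "K = (h/2) powr \<gamma> / (m - x) powr \<gamma>"
    have K: "K \<ge> 0" by (simp add: K_def)
    have ic: "(\<lambda>y. qL c h y * wt \<gamma> c y) integrable_on {c..c+h}"
      by (rule qL_integrable) (use assms in auto)
    have "integral {c..c+h} (\<lambda>y. K * (qL c h y * wt \<gamma> c y)) \<le> integral {c..c+h} (\<lambda>y. qL c h y * wt \<gamma> x y)"
    proof (rule int_ge_open[OF ix])
      show "(\<lambda>y. K * (qL c h y * wt \<gamma> c y)) integrable_on {c..c+h}"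
        using integrable_on_cmult_left[OF ic, of K] by simp
    next
      fix y assume y: "c < y" "y < c + h"
      have wx: "wt \<gamma> x y = 1 / (y - x) powr \<gamma>" using y 1 by (simp add: wt_def)
      have wc: "wt \<gamma> c y = 1 / (y - c) powr \<gamma>" using y by (simp add: wt_def)
      have iden: "(h/2) * (y - x) - (m - x) * (y - c) = (c - x) * (m - y)"
        by (simp add: m_def field_simps)
      have "(K * wt \<gamma> c y) * qL c h y \<le> qL c h y * wt \<gamma> x y"
      proof (rule sign_mul)
        show "(qL c h y \<le> 0 \<and> wt \<gamma> x y \<le> K * wt \<gamma> c y) \<or> (0 \<le> qL c h y \<and> K * wt \<gamma> c y \<le> wt \<gamma> x y)"
        proof (cases "y \<le> m")
          case True
          have "(m - x) * (y - c) \<le> (h/2) * (y - x)"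
            using iden True 1 mult_nonneg_nonneg[of "c - x" "m - y"] by linarith
          then have "1 / (y - x) powr \<gamma> \<le> ((h/2) powr \<gamma> / (m - x) powr \<gamma>) * (1 / (y - c) powr \<gamma>)"
            using y 1 True assms by (intro wpow_le) (auto simp: m_def)
          then show ?thesis using qneg[of y] y True by (simp add: wx wc K_def)
        next
          case False
          have "(h/2) * (y - x) \<le> (m - x) * (y - c)"
            using iden False 1 mult_nonneg_nonpos[of "c - x" "m - y"] by linarith
          then have "((h/2) powr \<gamma> / (m - x) powr \<gamma>) * (1 / (y - c) powr \<gamma>) \<le> 1 / (y - x) powr \<gamma>"
            using y 1 False assms by (intro wpow_ge) (auto simp: m_def)
          then show ?thesis using qpos[of y] y False by (simp add: wx wc K_def)
        qed
      qed
      then show "K * (qL c h y * wt \<gamma> c y) \<le> qL c h y * wt \<gamma> x y" by (simp add: algebra_simps)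
    qed
    moreover have "0 \<le> integral {c..c+h} (\<lambda>y. K * (qL c h y * wt \<gamma> c y))"
      using K cellL_c[OF assms(1-3), of c] by simp
    ultimately show ?thesis by linarith
  next
    case 2
    then show ?thesis using cellL_m assms by blast
  next
    case 3
    define K where "K = 1 / (x - m) powr \<gamma>"
    have K: "K \<ge> 0" by (simp add: K_def)
    have ip: "qL c h integrable_on {c..c+h}" using qL_poly[OF assms(1)] by blast
    have "integral {c..c+h} (\<lambda>y. K * qL c h y) \<le> integral {c..c+h} (\<lambda>y. qL c h y * wt \<gamma> x y)"
    proof (rule int_ge_open[OF ix])
      show "(\<lambda>y. K * qL c h y) integrable_on {c..c+h}"
        using integrable_on_cmult_left[OF ip, of K] by simp
    next
      fix y assume y: "c < y" "y < c + h"
      have wx: "wt \<gamma> x y = 1 / (x - y) powr \<gamma>" using y 3 by (simp add: wt_def)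
      show "K * qL c h y \<le> qL c h y * wt \<gamma> x y"
      proof (rule sign_mul)
        show "(qL c h y \<le> 0 \<and> wt \<gamma> x y \<le> K) \<or> (0 \<le> qL c h y \<and> K \<le> wt \<gamma> x y)"
        proof (cases "y \<le> m")
          case True
          have "1 / (x - y) powr \<gamma> \<le> 1 / (x - m) powr \<gamma>"
            using y 3 True assms by (intro inv_powr_anti) (auto simp: m_def)
          then show ?thesis using qneg[of y] y True by (simp add: wx K_def)
        next
          case False
          have "1 / (x - m) powr \<gamma> \<le> 1 / (x - y) powr \<gamma>"
            using y 3 False assms by (intro inv_powr_anti) (auto simp: m_def)
          then show ?thesis using qpos[of y] y False by (simp add: wx K_def)
        qed
      qed
    qed
    moreover have "integral {c..c+h} (\<lambda>y. K * qL c h y) = K * (h/6)"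
      using integral_unique[OF qL_poly[OF assms(1), of c]] by simp
    moreover have "0 \<le> K * (h/6)" using K assms by simp
    ultimately show ?thesis by linarith
  qed
qed



lemma cellR_e:
  assumes "h > 0" "0 < \<gamma>" "\<gamma> < 1"
  shows "0 \<le> integral {c..c+h} (\<lambda>y. qR c h y * wt \<gamma> (c+h) y)"
proof -
  define P where "P = h powr (2 - \<gamma>)"
  have P: "P > 0" using assms by (simp add: P_def)
  have d: "3 - \<gamma> \<noteq> 0" "2 - \<gamma> \<noteq> 0" using assms by auto
  have h3: "h powr (3 - \<gamma>) = h * P"
    using assms powr_add[of h 1 "2 - \<gamma>"] by (simp add: P_def)
  have I: "((\<lambda>y. (2/h^2 * (y - (c+h))^2 + (1/h) * (y - (c+h))) * wt \<gamma> (c+h) y) has_integral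
      2/h^2 * (((c + h - c) powr (3 - \<gamma>) + (c + h - (c + h)) powr (3 - \<gamma>)) / (3 - \<gamma>))
    + (1/h) * (((c + h - (c+h)) powr (2 - \<gamma>) - (c + h - c) powr (2 - \<gamma>)) / (2 - \<gamma>))) {c..c+h}"
    by (rule mid_quad) (use assms in auto)
  have I': "((\<lambda>y. qR c h y * wt \<gamma> (c+h) y) has_integral
      2/h^2 * ((h * P) / (3 - \<gamma>)) + (-1/h) * (P / (2 - \<gamma>))) {c..c+h}"
    by (rule has_integral_eq[OF _ has_integral_eq_rhs[OF I]])
      (use assms in \<open>simp_all add: qR_def field_simps power2_eq_square h3 P_def\<close>)
  have "2/h^2 * ((h * P) / (3 - \<gamma>)) + (-1/h) * (P / (2 - \<gamma>)) = P / h * (2/(3 - \<gamma>) - 1/(2 - \<gamma>))"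
  proof -
    have "2/h^2 * ((h * P) / (3 - \<gamma>)) = P/h * (2/(3-\<gamma>))"
      using assms by (simp add: power2_eq_square)
    moreover have "(-1/h) * (P / (2 - \<gamma>)) = - (P/h * (1/(2-\<gamma>)))" by simp
    ultimately show ?thesis by (simp add: right_diff_distrib)
  qed
  moreover have "2/(3 - \<gamma>) - 1/(2 - \<gamma>) \<ge> 0"
  proof -
    have "2/(3 - \<gamma>) - 1/(2 - \<gamma>) = (1 - \<gamma>) / ((3 - \<gamma>) * (2 - \<gamma>))"
      using d by (simp add: field_simps)
    moreover have "0 \<le> (1 - \<gamma>) / ((3 - \<gamma>) * (2 - \<gamma>))"
      using assms by (intro divide_nonneg_pos mult_pos_pos) auto
    ultimately show ?thesis by simp
  qed
  ultimately have "0 \<le> 2/h^2 * ((h * P) / (3 - \<gamma>)) + (-1/h) * (P / (2 - \<gamma>))"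
    using P assms by simp
  with I' show ?thesis by (simp add: integral_unique)
qed

lemma cellR_m:
  assumes "h > 0" "0 < \<gamma>" "\<gamma> < 1" "x = c + h/2"
  shows "0 \<le> integral {c..c+h} (\<lambda>y. qR c h y * wt \<gamma> x y)"
proof -
  have e1: "x - c = h/2" "c + h - x = h/2" using assms by auto
  have I: "((\<lambda>y. (2/h^2 * (y - x)^2 + (-1/h) * (y - x)) * wt \<gamma> x y) has_integral
      2/h^2 * (((x - c) powr (3 - \<gamma>) + (c + h - x) powr (3 - \<gamma>)) / (3 - \<gamma>))
    + (-1/h) * (((c + h - x) powr (2 - \<gamma>) - (x - c) powr (2 - \<gamma>)) / (2 - \<gamma>))) {c..c+h}"
    by (rule mid_quad) (use assms in auto)
  have I': "((\<lambda>y. qR c h y * wt \<gamma> x y) has_integral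
      2/h^2 * (((h/2) powr (3 - \<gamma>) + (h/2) powr (3 - \<gamma>)) / (3 - \<gamma>))) {c..c+h}"
    by (rule has_integral_eq[OF _ has_integral_eq_rhs[OF I]])
      (use assms in \<open>simp_all add: qR_def field_simps power2_eq_square e1\<close>)
  have "0 \<le> 2/h^2 * (((h/2) powr (3 - \<gamma>) + (h/2) powr (3 - \<gamma>)) / (3 - \<gamma>))"
    using assms by simp
  with I' show ?thesis by (simp add: integral_unique)
qed

lemma cellR:
  assumes "h > 0" "0 < \<gamma>" "\<gamma> < 1" "x \<le> c \<or> x = c + h/2 \<or> c + h \<le> x"
  shows "0 \<le> integral {c..c+h} (\<lambda>y. qR c h y * wt \<gamma> x y)"
proof -
  define m where "m = c + h/2"
  define e where "e = c + h"
  have ix: "(\<lambda>y. qR c h y * wt \<gamma> x y) integrable_on {c..c+h}"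
    by (rule qR_integrable) (use assms in auto)
  have qneg: "qR c h y \<le> 0" if "y \<le> c + h" "m \<le> y" for y
  proof -
    have "(c + h - y) * (2*c + h - 2*y) \<le> 0"
      using that by (intro mult_nonneg_nonpos) (auto simp: m_def)
    then show ?thesis unfolding qR_def by (rule divide_nonpos_nonneg) simp
  qed
  have qpos: "0 \<le> qR c h y" if "y \<le> c + h" "y \<le> m" for y
  proof -
    have "0 \<le> (c + h - y) * (2*c + h - 2*y)"
      using that by (intro mult_nonneg_nonneg) (auto simp: m_def)
    then show ?thesis unfolding qR_def by simp
  qed
  consider "c + h \<le> x" | "x = c + h/2" | "x \<le> c" using assms(4) by blast
  then show ?thesis
  proof cases
    case 1
    define K where "K = (h/2) powr \<gamma> / (x - m) powr \<gamma>"
    have K: "K \<ge> 0" by (simp add: K_def)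
    have ic: "(\<lambda>y. qR c h y * wt \<gamma> e y) integrable_on {c..c+h}"
      by (rule qR_integrable) (use assms in auto)
    have "integral {c..c+h} (\<lambda>y. K * (qR c h y * wt \<gamma> e y)) \<le> integral {c..c+h} (\<lambda>y. qR c h y * wt \<gamma> x y)"
    proof (rule int_ge_open[OF ix])
      show "(\<lambda>y. K * (qR c h y * wt \<gamma> e y)) integrable_on {c..c+h}"
        using integrable_on_cmult_left[OF ic, of K] by simp
    next
      fix y assume y: "c < y" "y < c + h"
      have wx: "wt \<gamma> x y = 1 / (x - y) powr \<gamma>" using y 1 by (simp add: wt_def)
      have wc: "wt \<gamma> e y = 1 / (e - y) powr \<gamma>" using y by (simp add: wt_def e_def)
      have iden: "(h/2) * (x - y) - (x - m) * (e - y) = (x - e) * (y - m)"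
        by (simp add: m_def e_def field_simps)
      have xe: "0 \<le> x - e" using 1 by (simp add: e_def)
      have "(K * wt \<gamma> e y) * qR c h y \<le> qR c h y * wt \<gamma> x y"
      proof (rule sign_mul)
        show "(qR c h y \<le> 0 \<and> wt \<gamma> x y \<le> K * wt \<gamma> e y) \<or> (0 \<le> qR c h y \<and> K * wt \<gamma> e y \<le> wt \<gamma> x y)"
        proof (cases "m \<le> y")
          case True
          have "(x - m) * (e - y) \<le> (h/2) * (x - y)"
            using iden True xe mult_nonneg_nonneg[of "x - e" "y - m"] by linarith
          then have "1 / (x - y) powr \<gamma> \<le> ((h/2) powr \<gamma> / (x - m) powr \<gamma>) * (1 / (e - y) powr \<gamma>)"
            using y 1 True assms by (intro wpow_le) (auto simp: m_def e_def)
          then show ?thesis using qneg[of y] y True by (simp add: wx wc K_def)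
        next
          case False
          have "(h/2) * (x - y) \<le> (x - m) * (e - y)"
            using iden False xe mult_nonneg_nonpos[of "x - e" "y - m"] by linarith
          then have "((h/2) powr \<gamma> / (x - m) powr \<gamma>) * (1 / (e - y) powr \<gamma>) \<le> 1 / (x - y) powr \<gamma>"
            using y 1 False assms by (intro wpow_ge) (auto simp: m_def e_def)
          then show ?thesis using qpos[of y] y False by (simp add: wx wc K_def)
        qed
      qed
      then show "K * (qR c h y * wt \<gamma> e y) \<le> qR c h y * wt \<gamma> x y" by (simp add: algebra_simps)
    qed
    moreover have "0 \<le> integral {c..c+h} (\<lambda>y. K * (qR c h y * wt \<gamma> e y))"
      using K cellR_e[OF assms(1-3), of c] by (simp add: e_def)
    ultimately show ?thesis by linarith
  next
    case 2
    then show ?thesis using cellR_m assms by blast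
  next
    case 3
    define K where "K = 1 / (m - x) powr \<gamma>"
    have K: "K \<ge> 0" by (simp add: K_def)
    have ip: "qR c h integrable_on {c..c+h}" using qR_poly[OF assms(1)] by blast
    have "integral {c..c+h} (\<lambda>y. K * qR c h y) \<le> integral {c..c+h} (\<lambda>y. qR c h y * wt \<gamma> x y)"
    proof (rule int_ge_open[OF ix])
      show "(\<lambda>y. K * qR c h y) integrable_on {c..c+h}"
        using integrable_on_cmult_left[OF ip, of K] by simp
    next
      fix y assume y: "c < y" "y < c + h"
      have wx: "wt \<gamma> x y = 1 / (y - x) powr \<gamma>" using y 3 by (simp add: wt_def)
      show "K * qR c h y \<le> qR c h y * wt \<gamma> x y"
      proof (rule sign_mul)
        show "(qR c h y \<le> 0 \<and> wt \<gamma> x y \<le> K) \<or> (0 \<le> qR c h y \<and> K \<le> wt \<gamma> x y)"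
        proof (cases "m \<le> y")
          case True
          have "1 / (y - x) powr \<gamma> \<le> 1 / (m - x) powr \<gamma>"
            using y 3 True assms by (intro inv_powr_anti) (auto simp: m_def)
          then show ?thesis using qneg[of y] y True by (simp add: wx K_def)
        next
          case False
          have "1 / (m - x) powr \<gamma> \<le> 1 / (y - x) powr \<gamma>"
            using y 3 False assms by (intro inv_powr_anti) (auto simp: m_def)
          then show ?thesis using qpos[of y] y False by (simp add: wx K_def)
        qed
      qed
    qed
    moreover have "integral {c..c+h} (\<lambda>y. K * qR c h y) = K * (h/6)"
      using integral_unique[OF qR_poly[OF assms(1), of c]] by simp
    moreover have "0 \<le> K * (h/6)" using K assms by simp
    ultimately show ?thesis by linarith
  qed
qed



lemma hstep_pos: "a < b \<Longrightarrow> 0 < M \<Longrightarrow> 0 < hstep a b M"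
  by (simp add: hstep_def)

lemma X_M: "0 < M \<Longrightarrow> a + real M * hstep a b M = b"
  by (simp add: hstep_def)

lemma phi_int_zero:
  assumes "0 < hstep a b M" "y \<le> a + real l * hstep a b M - hstep a b M \<or> a + real l * hstep a b M + hstep a b M \<le> y"
  shows "phi_int a b M l y = 0"
  using assms by (auto simp: phi_int_def Let_def)

lemma phi_int_left:
  assumes "0 < hstep a b M" "a + real l * hstep a b M - hstep a b M \<le> y" "y \<le> a + real l * hstep a b M"
    "a \<le> y" "y \<le> b"
  shows "phi_int a b M l y = qL (a + real l * hstep a b M - hstep a b M) (hstep a b M) y"
  using assms by (auto simp: phi_int_def Let_def qL_def power2_eq_square field_simps)

lemma phi_int_right:
  assumes "0 < hstep a b M" "a + real l * hstep a b M \<le> y" "y \<le> a + real l * hstep a b M + hstep a b M"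
    "a \<le> y" "y \<le> b"
  shows "phi_int a b M l y = qR (a + real l * hstep a b M) (hstep a b M) y"
proof (cases "y = a + real l * hstep a b M")
  case True
  then show ?thesis using assms by (auto simp: phi_int_def Let_def qR_def power2_eq_square field_simps)
next
  case False
  then show ?thesis using assms by (auto simp: phi_int_def Let_def qR_def power2_eq_square field_simps)
qed

lemma phi_mid_out:
  assumes "0 < hstep a b M" "y \<le> a + real l * hstep a b M - hstep a b M \<or> a + real l * hstep a b M \<le> y"
  shows "phi_mid a b M l y = 0"
  using assms by (auto simp: phi_mid_def Let_def)

lemma phi_mid_in:
  assumes "a + real l * hstep a b M - hstep a b M \<le> y" "y \<le> a + real l * hstep a b M"
  shows "phi_mid a b M l y = 4 * (y - (a + real l * hstep a b M - hstep a b M)) * (a + real l * hstep a b M - y) / (hstep a b M)^2"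
  using assms by (auto simp: phi_mid_def Let_def)

lemma phi_mid_nonneg: "0 \<le> phi_mid a b M l y"
  by (auto simp: phi_mid_def Let_def)

lemma has_integral_zero_open:
  fixes f :: "real \<Rightarrow> real"
  assumes "\<And>y. p < y \<Longrightarrow> y < q \<Longrightarrow> f y = 0"
  shows "(f has_integral 0) {p..q}"
proof -
  have neg: "negligible {p, q}" by auto
  show ?thesis
    by (rule has_integral_spike[OF neg _ has_integral_0]) (use assms in auto)
qed

lemma assemble:
  fixes f :: "real \<Rightarrow> real"
  assumes "a \<le> p" "p \<le> q" "q \<le> b"
    "\<And>y. a < y \<Longrightarrow> y < p \<Longrightarrow> f y = 0" "\<And>y. q < y \<Longrightarrow> y < b \<Longrightarrow> f y = 0"
    "(f has_integral L) {p..q}"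
  shows "(f has_integral L) {a..b}"
proof -
  have 1: "(f has_integral 0) {a..p}" by (rule has_integral_zero_open) (use assms in auto)
  have 2: "(f has_integral 0) {q..b}" by (rule has_integral_zero_open) (use assms in auto)
  have 3: "(f has_integral (0 + L)) {a..q}"
    by (rule has_integral_combine[OF assms(1) assms(2) 1 assms(6)])
  have aq: "a \<le> q" using assms by linarith
  have "(f has_integral (0 + L + 0)) {a..b}"
    by (rule has_integral_combine[OF aq assms(3) 3 2])
  then show ?thesis by simp
qed

lemma node_cases:
  fixes x c h :: real and n :: int
  assumes "0 < h" "x - c = of_int n * (h/2)"
  shows "x \<le> c \<or> x = c + h/2 \<or> c + h \<le> x"
proof -
  consider "n \<le> 0" | "n = 1" | "n \<ge> 2" by linarith
  then show ?thesis
  proof cases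
    case 1
    then have "of_int n * (h/2) \<le> 0" using assms by (intro mult_nonpos_nonneg) auto
    then show ?thesis using assms by auto
  next
    case 2
    then show ?thesis using assms by auto
  next
    case 3
    then have "2 * (h/2) \<le> of_int n * (h/2)" using assms by (intro mult_right_mono) auto
    then show ?thesis using assms by linarith
  qed
qed

lemma mult_h_mono:
  fixes h :: real
  assumes "0 < h" "real l \<le> real l'"
  shows "real l * h \<le> real l' * h"
  using assms by (intro mult_right_mono) auto



lemma g_even:
  assumes ab: "a < b" and M: "0 < M" and g: "0 < \<gamma>" "\<gamma> < 1" and lM: "l \<le> M"
  shows "(\<lambda>y. phi_int a b M l y * wt \<gamma> (xnode a b M i) y) integrable_on {a..b} \<and>
         0 \<le> integral {a..b} (\<lambda>y. phi_int a b M l y * wt \<gamma> (xnode a b M i) y)"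
proof -
  define h where "h = hstep a b M"
  have h: "0 < h" using hstep_pos[OF ab M] by (simp add: h_def)
  define X where "X = a + real l * h"
  define x where "x = xnode a b M i"
  define f where "f = (\<lambda>y. phi_int a b M l y * wt \<gamma> x y)"
  have xdef: "x = a + real i * h / 2" by (simp add: x_def xnode_def h_def)
  have Xb: "X \<le> b"
  proof -
    have "real l * h \<le> real M * h" using h lM by (intro mult_h_mono) auto
    then show ?thesis using X_M[OF M, of a b] by (simp add: X_def h_def)
  qed
  have Xa: "a \<le> X" using h by (simp add: X_def)
  have cL: "x \<le> (X - h) \<or> x = (X - h) + h/2 \<or> (X - h) + h \<le> x"
    by (rule node_cases[OF h, of _ _ "int i - 2 * int l + 2"]) (simp add: xdef X_def field_simps)
  have cR: "x \<le> X \<or> x = X + h/2 \<or> X + h \<le> x"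
    by (rule node_cases[OF h, of _ _ "int i - 2 * int l"]) (simp add: xdef X_def field_simps)
  define pL where "pL = (if l = 0 then a else X - h)"
  define qR' where "qR' = (if l = M then b else X + h)"
  have pLa: "a \<le> pL" and pLX: "pL \<le> X"
  proof -
    show "a \<le> pL"
    proof (cases "l = 0")
      case False
      then have "1 * h \<le> real l * h" using h by (intro mult_right_mono) auto
      then show ?thesis using False by (simp add: pL_def X_def)
    qed (simp add: pL_def)
    show "pL \<le> X" using h Xa by (simp add: pL_def)
  qed
  have qRb: "qR' \<le> b" and XqR: "X \<le> qR'"
  proof -
    show "qR' \<le> b"
    proof (cases "l = M")
      case False
      then have "real (l + 1) * h \<le> real M * h" using h lM by (intro mult_h_mono) auto
      then show ?thesis using False X_M[OF M, of a b] by (simp add: qR'_def X_def h_def algebra_simps)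
    qed (simp add: qR'_def)
    show "X \<le> qR'" using h Xb by (simp add: qR'_def)
  qed
  obtain L where hasL: "(f has_integral L) {pL..X}" and L: "0 \<le> L"
  proof (cases "l = 0")
    case True
    then have "pL = X" by (simp add: pL_def X_def)
    then show ?thesis using that[of 0] by auto
  next
    case False
    then have pl: "pL = X - h" by (simp add: pL_def)
    have i: "(\<lambda>y. qL (X - h) h y * wt \<gamma> x y) integrable_on {X - h..X}"
      by (rule qL_integrable) (use h g in auto)
    have nn: "0 \<le> integral {X - h..X} (\<lambda>y. qL (X - h) h y * wt \<gamma> x y)"
      using cellL[OF h g cL] by simp
    have "(f has_integral integral {X - h..X} (\<lambda>y. qL (X - h) h y * wt \<gamma> x y)) {X - h..X}"
    proof (rule has_integral_eq[OF _ integrable_integral[OF i]])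
      fix y assume y: "y \<in> {X - h..X}"
      have "a \<le> y" "y \<le> b" using y pLa pl Xb by auto
      then show "qL (X - h) h y * wt \<gamma> x y = f y"
        unfolding f_def using phi_int_left[of a b M l y] h y
        by (auto simp: h_def X_def)
    qed
    then have "(f has_integral integral {X - h..X} (\<lambda>y. qL (X - h) h y * wt \<gamma> x y)) {pL..X}"
      by (simp add: pl)
    then show ?thesis using that nn by blast
  qed
  obtain R where hasR: "(f has_integral R) {X..qR'}" and R: "0 \<le> R"
  proof (cases "l = M")
    case True
    then have "qR' = X" using X_M[OF M, of a b] by (simp add: qR'_def X_def h_def)
    then show ?thesis using that[of 0] by auto
  next
    case False
    then have qr: "qR' = X + h" by (simp add: qR'_def)
    have i: "(\<lambda>y. qR X h y * wt \<gamma> x y) integrable_on {X..X + h}"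
      by (rule qR_integrable) (use h g in auto)
    have nn: "0 \<le> integral {X..X + h} (\<lambda>y. qR X h y * wt \<gamma> x y)"
      by (rule cellR[OF h g cR])
    have "(f has_integral integral {X..X + h} (\<lambda>y. qR X h y * wt \<gamma> x y)) {X..X + h}"
    proof (rule has_integral_eq[OF _ integrable_integral[OF i]])
      fix y assume y: "y \<in> {X..X + h}"
      have "a \<le> y" "y \<le> b" using y Xa qRb qr by auto
      then show "qR X h y * wt \<gamma> x y = f y"
        unfolding f_def using phi_int_right[of a b M l y] h y
        by (auto simp: h_def X_def)
    qed
    then have "(f has_integral integral {X..X + h} (\<lambda>y. qR X h y * wt \<gamma> x y)) {X..qR'}"
      by (simp add: qr)
    then show ?thesis using that nn by blast
  qed
  have LR: "(f has_integral (L + R)) {pL..qR'}"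
    by (rule has_integral_combine[OF pLX XqR hasL hasR])
  have pq: "pL \<le> qR'" using pLX XqR by linarith
  have z1: "f y = 0" if y: "a < y" "y < pL" for y
  proof -
    have "l \<noteq> 0" and "y \<le> X - h" using y by (auto simp: pL_def split: if_splits)
    then show "f y = 0" unfolding f_def using phi_int_zero[of a b M y l] h by (simp add: h_def X_def)
  qed
  have z2: "f y = 0" if y: "qR' < y" "y < b" for y
  proof -
    have "l \<noteq> M" and "X + h \<le> y" using y by (auto simp: qR'_def split: if_splits)
    then show "f y = 0" unfolding f_def using phi_int_zero[of a b M y l] h by (simp add: h_def X_def)
  qed
  have "(f has_integral (L + R)) {a..b}"
    by (rule assemble[OF pLa pq qRb z1 z2 LR])
  then show ?thesis using L R unfolding f_def x_def by (auto simp: integral_unique)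
qed

lemma g_odd:
  assumes ab: "a < b" and M: "0 < M" and g: "0 < \<gamma>" "\<gamma> < 1" and l: "1 \<le> l" "l \<le> M"
  shows "(\<lambda>y. phi_mid a b M l y * wt \<gamma> (xnode a b M i) y) integrable_on {a..b} \<and>
         0 \<le> integral {a..b} (\<lambda>y. phi_mid a b M l y * wt \<gamma> (xnode a b M i) y)"
proof -
  define h where "h = hstep a b M"
  have h: "0 < h" using hstep_pos[OF ab M] by (simp add: h_def)
  define X where "X = a + real l * h"
  define x where "x = xnode a b M i"
  define f where "f = (\<lambda>y. phi_mid a b M l y * wt \<gamma> x y)"
  have Xb: "X \<le> b"
  proof -
    have "real l * h \<le> real M * h" using h l by (intro mult_h_mono) auto
    then show ?thesis using X_M[OF M, of a b] by (simp add: X_def h_def)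
  qed
  have Xa: "a \<le> X - h"
  proof -
    have "1 * h \<le> real l * h" using h l by (intro mult_right_mono) auto
    then show ?thesis by (simp add: X_def)
  qed
  define c where "c = X - h"
  have i: "(\<lambda>y. ((-4/h^2) * y^2 + (4*(2*c+h)/h^2) * y + (- 4*c*(c+h)/h^2)) * wt \<gamma> x y) integrable_on {X - h..X}"
    by (rule quad_integrable) (use h g in auto)
  have i': "f integrable_on {X - h..X}"
  proof (rule integrable_eq[OF i])
    fix y assume y: "y \<in> {X - h..X}"
    have pe: "phi_mid a b M l y = 4 * (y - c) * (X - y) / h^2"
      using phi_mid_in[of a l b M y] y by (simp add: X_def h_def c_def)
    show "((-4/h^2) * y^2 + (4*(2*c+h)/h^2) * y + (- 4*c*(c+h)/h^2)) * wt \<gamma> x y = f y"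
      unfolding f_def pe using h by (simp add: c_def field_simps power2_eq_square)
  qed
  have "(f has_integral integral {X - h..X} f) {a..b}"
  proof (rule assemble[OF Xa _ Xb])
    show "X - h \<le> X" using h by simp
  next
    fix y assume "a < y" "y < X - h"
    then show "f y = 0" unfolding f_def using phi_mid_out[of a b M y l] h by (simp add: h_def X_def)
  next
    fix y assume "X < y" "y < b"
    then show "f y = 0" unfolding f_def using phi_mid_out[of a b M y l] h by (simp add: h_def X_def)
  qed (rule integrable_integral[OF i'])
  then have ii: "f integrable_on {a..b}" by blast
  have "0 \<le> integral {a..b} f"
    by (rule integral_nonneg[OF ii]) (simp add: f_def wt_def phi_mid_nonneg)
  then show ?thesis using ii unfolding f_def x_def by simp
qed



lemma g_half:
  assumes ab: "a < b" and M: "0 < M" and g: "0 < \<gamma>" "\<gamma> < 1" and j: "j \<le> 2 * M"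
  shows "(\<lambda>y. phi_half a b M j y * wt \<gamma> (xnode a b M i) y) integrable_on {a..b} \<and>
         0 \<le> integral {a..b} (\<lambda>y. phi_half a b M j y * wt \<gamma> (xnode a b M i) y)"
proof (cases "even j")
  case True
  then have "phi_half a b M j = phi_int a b M (j div 2)" by (simp add: phi_half_def)
  moreover have "j div 2 \<le> M" using j by simp
  ultimately show ?thesis using g_even[OF ab M g, of "j div 2" i] by simp
next
  case False
  then have "phi_half a b M j = phi_mid a b M ((j + 1) div 2)" by (simp add: phi_half_def)
  moreover have "1 \<le> (j + 1) div 2" "(j + 1) div 2 \<le> M" using j False by auto presburger+
  ultimately show ?thesis using g_odd[OF ab M g, of "(j + 1) div 2" i] by simp
qed

lemma g_coef_eq:
  "g_coef a b \<gamma> M i j = integral {a..b} (\<lambda>y. phi_half a b M j y * wt \<gamma> (xnode a b M i) y)"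
  by (simp add: g_coef_def wt_def)

lemma d_coef_eq:
  "d_coef a b \<gamma> M i = integral {a..b} (\<lambda>y. (y - xnode a b M i)^0 * wt \<gamma> (xnode a b M i) y)"
  by (simp add: d_coef_def wt_def)

lemma xnode_in:
  assumes ab: "a < b" and M: "0 < M" and i: "i \<le> 2 * M"
  shows "a \<le> xnode a b M i" "xnode a b M i \<le> b"
proof -
  have h: "0 < hstep a b M" by (rule hstep_pos[OF ab M])
  show "a \<le> xnode a b M i" using h by (simp add: xnode_def)
  have "real i * hstep a b M \<le> real (2 * M) * hstep a b M" using h i by (intro mult_h_mono) auto
  then show "xnode a b M i \<le> b" using X_M[OF M, of a b] by (simp add: xnode_def)
qed

lemma d_has:
  assumes ab: "a < b" and M: "0 < M" and g: "0 < \<gamma>" "\<gamma> < 1" and i: "i \<le> 2 * M"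
  shows "((\<lambda>y. (y - xnode a b M i)^0 * wt \<gamma> (xnode a b M i) y) has_integral
     ((xnode a b M i - a) powr (1 - \<gamma>) + (b - xnode a b M i) powr (1 - \<gamma>)) / (1 - \<gamma>)) {a..b}"
  using int_mid[OF xnode_in[OF ab M i] g, of 0] by simp

lemma d_bound:
  assumes ab: "a < b" and M: "0 < M" and g: "0 < \<gamma>" "\<gamma> < 1" and i: "i \<le> 2 * M"
  shows "d_coef a b \<gamma> M i \<le> 2 * (b - a) powr (1 - \<gamma>) / (1 - \<gamma>)"
proof -
  define x where "x = xnode a b M i"
  have x: "a \<le> x" "x \<le> b" using xnode_in[OF ab M i] by (auto simp: x_def)
  have "(x - a) powr (1 - \<gamma>) \<le> (b - a) powr (1 - \<gamma>)" using x g by (intro powr_mono2) auto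
  moreover have "(b - x) powr (1 - \<gamma>) \<le> (b - a) powr (1 - \<gamma>)" using x g by (intro powr_mono2) auto
  ultimately have "((x - a) powr (1 - \<gamma>) + (b - x) powr (1 - \<gamma>)) / (1 - \<gamma>) \<le> 2 * (b - a) powr (1 - \<gamma>) / (1 - \<gamma>)"
    using g by (intro divide_right_mono) auto
  then show ?thesis using integral_unique[OF d_has[OF ab M g i]] d_coef_eq[of a b \<gamma> M i] by (simp add: x_def)
qed

lemma partition:
  assumes ab: "a < b" and M: "0 < M" and y: "a \<le> y" "y \<le> b"
  shows "(\<Sum>j = 0..2 * M. phi_half a b M j y) = 1"
proof -
  define h where "h = hstep a b M"
  have h: "0 < h" using hstep_pos[OF ab M] by (simp add: h_def)
  define s where "s = (y - a) / h"
  have ys: "y = a + s * h" using h by (simp add: s_def)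
  have s0: "0 \<le> s" using h y by (simp add: s_def)
  have sM: "s \<le> real M" using h y X_M[OF M, of a b] by (simp add: s_def h_def field_simps)
  obtain k where k: "1 \<le> k" "k \<le> M" "real k - 1 \<le> s" "s \<le> real k"
  proof (cases "s \<le> 1")
    case True
    then show ?thesis using that[of 1] M s0 by auto
  next
    case False
    define k where "k = nat \<lceil>s\<rceil>"
    have c0: "1 \<le> \<lceil>s\<rceil>" using False by (simp add: one_le_ceiling)
    have rk: "real k = of_int \<lceil>s\<rceil>" using c0 by (simp add: k_def)
    have c1: "s \<le> of_int \<lceil>s\<rceil>" "of_int \<lceil>s\<rceil> < s + 1" by linarith+
    have c2: "\<lceil>s\<rceil> \<le> int M" using sM by (simp add: ceiling_le_iff)
    have "1 \<le> k" using c0 unfolding k_def by linarith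
    moreover have "k \<le> M" using c2 unfolding k_def by linarith
    moreover have "real k - 1 \<le> s" "s \<le> real k" using rk c1 by linarith+
    ultimately show ?thesis using that by blast
  qed
  define c where "c = a + real k * h - h"
  have cy: "c \<le> y"
  proof -
    have "(real k - 1) * h \<le> s * h" using k h by (intro mult_right_mono) auto
    then show ?thesis by (simp add: c_def ys algebra_simps)
  qed
  have yc: "y \<le> c + h"
  proof -
    have "s * h \<le> real k * h" using k h by (intro mult_right_mono) auto
    then show ?thesis by (simp add: c_def ys algebra_simps)
  qed
  have mono: "\<And>l l'. l \<le> l' \<Longrightarrow> real l * h \<le> real l' * h" using h by (intro mult_h_mono) auto
  define u where "u = qR c h y"
  define v where "v = 4 * (y - c) * (c + h - y) / h^2"
  define w where "w = qL c h y"
  have pt: "phi_half a b M j y = (if j = 2*k - 2 then u else 0) + (if j = 2*k - 1 then v else 0)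
              + (if j = 2*k then w else 0)" for j
  proof (cases "even j")
    case True
    then obtain l where jl: "j = 2 * l" by blast
    have ph: "phi_half a b M j y = phi_int a b M l y" using jl by (simp add: phi_half_def)
    consider "l + 2 \<le> k" | "l = k - 1" | "l = k" | "k + 1 \<le> l" using k by linarith
    then show ?thesis
    proof cases
      case 1
      have "real (l + 1) * h \<le> real (k - 1) * h" using 1 by (intro mono) auto
      then have "a + real l * h + h \<le> y" using cy k by (simp add: c_def of_nat_diff algebra_simps)
      moreover have "j \<noteq> 2*k-2" "j \<noteq> 2*k-1" "j \<noteq> 2*k" using 1 jl k(1) by arith+
      ultimately show ?thesis using ph phi_int_zero[of a b M y l] h by (simp add: h_def)
    next
      case 2
      have "phi_int a b M l y = qR (a + real l * h) h y"
        using phi_int_right[of a b M l y] h cy yc y 2 k by (simp add: h_def c_def of_nat_diff algebra_simps)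
      moreover have "a + real l * h = c" using 2 k by (simp add: c_def of_nat_diff algebra_simps)
      moreover have "j = 2*k-2" "j \<noteq> 2*k-1" "j \<noteq> 2*k" using 2 jl k(1) by arith+
      ultimately show ?thesis using ph by (simp add: u_def)
    next
      case 3
      have "phi_int a b M l y = qL (a + real l * h - h) h y"
        using phi_int_left[of a b M l y] h cy yc y 3 by (simp add: h_def c_def)
      moreover have "j \<noteq> 2*k-2" "j \<noteq> 2*k-1" "j = 2*k" using 3 jl k(1) by arith+
      moreover have "a + real l * h - h = c" using 3 by (simp add: c_def)
      ultimately show ?thesis using ph by (simp add: w_def)
    next
      case 4
      have "real (k + 1) * h \<le> real l * h" using 4 by (intro mono) auto
      then have "y \<le> a + real l * h - h" using yc by (simp add: c_def algebra_simps)
      moreover have "j \<noteq> 2*k-2" "j \<noteq> 2*k-1" "j \<noteq> 2*k" using 4 jl k(1) by arith+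
      ultimately show ?thesis using ph phi_int_zero[of a b M y l] h by (simp add: h_def)
    qed
  next
    case False
    define l where "l = (j + 1) div 2"
    have jl: "j = 2 * l - 1" "1 \<le> l" using False unfolding l_def by presburger+
    have ph: "phi_half a b M j y = phi_mid a b M l y" using jl False by (simp add: phi_half_def)
    consider "l + 1 \<le> k" | "l = k" | "k + 1 \<le> l" by linarith
    then show ?thesis
    proof cases
      case 1
      have "real l * h \<le> real (k - 1) * h" using 1 by (intro mono) auto
      then have "a + real l * h \<le> y" using cy k by (simp add: c_def of_nat_diff algebra_simps)
      moreover have "j \<noteq> 2*k-2" "j \<noteq> 2*k-1" "j \<noteq> 2*k" using 1 jl k(1) by arith+
      ultimately show ?thesis using ph phi_mid_out[of a b M y l] h by (simp add: h_def)
    next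
      case 2
      have "phi_mid a b M l y = 4 * (y - c) * (c + h - y) / h^2"
        using phi_mid_in[of a l b M y] cy yc 2 by (simp add: h_def c_def)
      moreover have "j \<noteq> 2*k-2" "j = 2*k-1" "j \<noteq> 2*k" using 2 jl k(1) by arith+
      ultimately show ?thesis using ph by (simp add: v_def)
    next
      case 3
      have "real (k + 1) * h \<le> real l * h" using 3 by (intro mono) auto
      then have "y \<le> a + real l * h - h" using yc by (simp add: c_def algebra_simps)
      moreover have "j \<noteq> 2*k-2" "j \<noteq> 2*k-1" "j \<noteq> 2*k" using 3 jl k(1) by arith+
      ultimately show ?thesis using ph phi_mid_out[of a b M y l] h by (simp add: h_def)
    qed
  qed
  have "(\<Sum>j = 0..2 * M. phi_half a b M j y) = u + v + w"
  proof -
    have mem: "2*k-2 \<in> {0..2*M}" "2*k-1 \<in> {0..2*M}" "2*k \<in> {0..2*M}" using k(1,2) by auto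
    show ?thesis by (simp only: pt sum.distrib sum.delta finite_atLeastAtMost mem if_True)
  qed
  also have "\<dots> = 1" using h by (simp add: u_def v_def w_def qR_def qL_def field_simps power2_eq_square)
  finally show ?thesis .
qed

lemma g_sum:
  assumes ab: "a < b" and M: "0 < M" and g: "0 < \<gamma>" "\<gamma> < 1" and i: "i \<le> 2 * M"
  shows "(\<Sum>j = 0..2 * M. g_coef a b \<gamma> M i j) = d_coef a b \<gamma> M i"
proof -
  define x where "x = xnode a b M i"
  have "(\<Sum>j = 0..2 * M. g_coef a b \<gamma> M i j)
      = integral {a..b} (\<lambda>y. \<Sum>j = 0..2 * M. phi_half a b M j y * wt \<gamma> x y)"
    by (subst integral_sum) (use g_half[OF ab M g] in \<open>auto simp: g_coef_eq x_def\<close>)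
  also have "\<dots> = integral {a..b} (\<lambda>y. (y - x)^0 * wt \<gamma> x y)"
  proof (rule integral_cong)
    fix y assume "y \<in> {a..b}"
    then show "(\<Sum>j = 0..2 * M. phi_half a b M j y * wt \<gamma> x y) = (y - x)^0 * wt \<gamma> x y"
      using partition[OF ab M, of y] by (simp add: sum_distrib_right[symmetric])
  qed
  also have "\<dots> = d_coef a b \<gamma> M i" by (simp add: d_coef_eq x_def)
  finally show ?thesis .
qed



lemma supnorm_ge:
  assumes "1 \<le> j" "j \<le> n"
  shows "\<bar>v j\<bar> \<le> supnorm n v"
  unfolding supnorm_def using assms by (intro Max_ge) auto

lemma supnorm_attained:
  assumes "1 \<le> n"
  obtains i where "1 \<le> i" "i \<le> n" "\<bar>v i\<bar> = supnorm n v"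
proof -
  have "supnorm n v \<in> (\<lambda>i. \<bar>v i\<bar>) ` {1..n}"
    unfolding supnorm_def using assms by (intro Max_in) auto
  then show ?thesis using that by auto
qed

lemma supnorm_nonneg:
  assumes "1 \<le> n" shows "0 \<le> supnorm n v"
  using supnorm_ge[of 1 n v] assms by linarith

lemma step_bound:
  fixes d C \<tau> :: real and g :: "nat \<Rightarrow> real" and e e' :: "nat \<Rightarrow> real"
  assumes n: "1 \<le> n" and tau: "0 \<le> \<tau>" and i0: "1 \<le> i0" "i0 \<le> n"
    and gnn: "\<And>j. 1 \<le> j \<Longrightarrow> j \<le> n \<Longrightarrow> 0 \<le> g j"
    and gsum: "(\<Sum>j = 1..n. g j) \<le> d" and dC: "d \<le> C"
    and S: "\<bar>e i0\<bar> = supnorm n e"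
    and eq: "e i0 + \<tau> / 2 * (d * e i0 - (\<Sum>j = 1..n. g j * e j))
           = e' i0 - \<tau> / 2 * (d * e' i0 - (\<Sum>j = 1..n. g j * e' j))"
  shows "supnorm n e \<le> (1 + \<tau> * C) * supnorm n e'"
proof -
  define v where "v = e i0"
  define X where "X = d * v - (\<Sum>j = 1..n. g j * e j)"
  define S' where "S' = supnorm n e'"
  have S'0: "0 \<le> S'" using supnorm_nonneg[OF n] by (simp add: S'_def)
  have ej: "\<bar>e j\<bar> \<le> \<bar>v\<bar>" if "j \<in> {1..n}" for j
    using supnorm_ge[of j n e] that S by (simp add: v_def)
  have e'j: "\<bar>e' j\<bar> \<le> S'" if "j \<in> {1..n}" for j
    using supnorm_ge[of j n e'] that by (simp add: S'_def)
  have "(\<Sum>j = 1..n. g j * (v * e j)) \<le> (\<Sum>j = 1..n. g j * v^2)"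
  proof (rule sum_mono)
    fix j assume j: "j \<in> {1..n}"
    have "v * e j \<le> \<bar>v\<bar> * \<bar>e j\<bar>" by (metis abs_ge_self abs_mult)
    also have "\<dots> \<le> \<bar>v\<bar> * \<bar>v\<bar>" using ej[OF j] by (intro mult_left_mono) auto
    finally have "v * e j \<le> v^2" by (simp add: power2_eq_square)
    then show "g j * (v * e j) \<le> g j * v^2" using gnn j by (intro mult_left_mono) auto
  qed
  also have "\<dots> = (\<Sum>j = 1..n. g j) * v^2" by (simp add: sum_distrib_right)
  also have "\<dots> \<le> d * v^2" using gsum by (intro mult_right_mono) auto
  finally have vX: "0 \<le> v * X"
    unfolding X_def by (simp add: right_diff_distrib sum_distrib_left algebra_simps power2_eq_square)
  have "v^2 \<le> (v + \<tau>/2 * X)^2"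
  proof -
    have "(v + \<tau>/2 * X)^2 = v^2 + \<tau> * (v * X) + (\<tau>/2 * X)^2" by (simp add: power2_eq_square algebra_simps)
    moreover have "0 \<le> \<tau> * (v * X)" using tau vX by simp
    ultimately show ?thesis by (simp add: add_increasing2)
  qed
  then have 1: "\<bar>v\<bar> \<le> \<bar>v + \<tau>/2 * X\<bar>" by (simp add: abs_le_square_iff)
  define Y where "Y = d * e' i0 - (\<Sum>j = 1..n. g j * e' j)"
  have gS: "\<bar>\<Sum>j = 1..n. g j * e' j\<bar> \<le> d * S'"
  proof -
    have "\<bar>\<Sum>j = 1..n. g j * e' j\<bar> \<le> (\<Sum>j = 1..n. \<bar>g j * e' j\<bar>)" by (rule sum_abs)
    also have "\<dots> \<le> (\<Sum>j = 1..n. g j * S')"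
    proof (rule sum_mono)
      fix j assume j: "j \<in> {1..n}"
      show "\<bar>g j * e' j\<bar> \<le> g j * S'"
        using gnn[of j] j e'j[OF j] by (auto simp: abs_mult intro: mult_left_mono)
    qed
    also have "\<dots> = (\<Sum>j = 1..n. g j) * S'" by (simp add: sum_distrib_right)
    also have "\<dots> \<le> d * S'" using gsum S'0 by (intro mult_right_mono) auto
    finally show ?thesis .
  qed
  have d0: "0 \<le> d"
    using gsum sum_nonneg[of "{1..n}" g] gnn by fastforce
  have "\<bar>d * e' i0\<bar> \<le> d * S'" using d0 e'j[of i0] i0 by (simp add: abs_mult mult_left_mono)
  then have Y: "\<bar>Y\<bar> \<le> 2 * d * S'" using gS unfolding Y_def by linarith
  have t1: "\<bar>e' i0 - \<tau>/2 * Y\<bar> \<le> \<bar>e' i0\<bar> + \<bar>\<tau>/2 * Y\<bar>" by (rule abs_triangle_ineq4)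
  have t2: "\<bar>\<tau>/2 * Y\<bar> = \<tau>/2 * \<bar>Y\<bar>" using tau by (simp add: abs_mult)
  have "\<bar>e' i0 - \<tau>/2 * Y\<bar> \<le> \<bar>e' i0\<bar> + \<tau>/2 * \<bar>Y\<bar>" using t1 t2 by simp
  also have "\<dots> \<le> S' + \<tau>/2 * (2 * C * S')"
  proof -
    have "2 * d * S' \<le> 2 * C * S'" using dC S'0 by (intro mult_right_mono) auto
    then have "\<tau>/2 * \<bar>Y\<bar> \<le> \<tau>/2 * (2 * C * S')" using Y tau by (intro mult_left_mono) auto
    moreover have "\<bar>e' i0\<bar> \<le> S'" using e'j[of i0] i0 by simp
    ultimately show ?thesis by linarith
  qed
  also have "\<dots> = (1 + \<tau> * C) * S'" by (simp add: algebra_simps)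
  finally have 2: "\<bar>e' i0 - \<tau>/2 * Y\<bar> \<le> (1 + \<tau> * C) * S'" .
  have "v + \<tau>/2 * X = e' i0 - \<tau>/2 * Y" using eq by (simp add: v_def X_def Y_def)
  then show ?thesis using 1 2 S by (simp add: v_def S'_def)
qed



theorem theorem3p6:
  fixes a b \<gamma> T :: real and M N :: nat and \<epsilon> :: "nat \<Rightarrow> nat \<Rightarrow> real"
  assumes "a < b" and "0 < \<gamma>" and "\<gamma> < 1" and "M \<ge> 2"
    and "T > 0" and "N \<ge> 1"
    and scheme: "\<And>k i. 1 \<le> k \<Longrightarrow> k \<le> N \<Longrightarrow> 1 \<le> i \<Longrightarrow> i \<le> 2 * M - 1 \<Longrightarrow>
        \<epsilon> k i + (T / real N) / 2 * (\<Sum>j = 1..2 * M - 1. coll_A a b \<gamma> M i j * \<epsilon> k j)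
      = \<epsilon> (k - 1) i - (T / real N) / 2 * (\<Sum>j = 1..2 * M - 1. coll_A a b \<gamma> M i j * \<epsilon> (k - 1) j)"
  shows "\<forall>k \<le> N. supnorm (2 * M - 1) (\<epsilon> k)
           \<le> exp (T * (2 * (b - a) powr (1 - \<gamma>) / (1 - \<gamma>))) * supnorm (2 * M - 1) (\<epsilon> 0)"
proof -
  note ab = assms(1) and g = assms(2,3)
  have M: "0 < M" using assms(4) by simp
  define n where "n = 2 * M - 1"
  have n: "1 \<le> n" using assms(4) by (simp add: n_def)
  define \<tau> where "\<tau> = T / real N"
  have tau: "0 \<le> \<tau>" using assms(5,6) by (simp add: \<tau>_def)
  define C where "C = 2 * (b - a) powr (1 - \<gamma>) / (1 - \<gamma>)"
  have C: "0 \<le> C" using g by (simp add: C_def)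
  have gnn: "0 \<le> g_coef a b \<gamma> M i j" if "j \<le> 2 * M" for i j
    using g_half[OF ab M g that, of i] by (simp add: g_coef_eq)
  have gsum: "(\<Sum>j = 1..n. g_coef a b \<gamma> M i j) \<le> d_coef a b \<gamma> M i" if "i \<le> 2 * M" for i
  proof -
    have "(\<Sum>j = 1..n. g_coef a b \<gamma> M i j) \<le> (\<Sum>j = 0..2 * M. g_coef a b \<gamma> M i j)"
      by (rule sum_mono2) (auto simp: n_def intro: gnn)
    then show ?thesis using g_sum[OF ab M g that] by simp
  qed
  have sumA: "(\<Sum>j = 1..n. coll_A a b \<gamma> M i j * e j)
      = d_coef a b \<gamma> M i * e i - (\<Sum>j = 1..n. g_coef a b \<gamma> M i j * e j)"
    if "1 \<le> i" "i \<le> n" for i and e :: "nat \<Rightarrow> real"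
  proof -
    have "(\<Sum>j = 1..n. coll_A a b \<gamma> M i j * e j)
        = (\<Sum>j = 1..n. (if i = j then d_coef a b \<gamma> M i * e i else 0) - g_coef a b \<gamma> M i j * e j)"
      by (rule sum.cong) (auto simp: coll_A_def left_diff_distrib)
    also have "\<dots> = d_coef a b \<gamma> M i * e i - (\<Sum>j = 1..n. g_coef a b \<gamma> M i j * e j)"
      using that by (simp add: sum_subtractf)
    finally show ?thesis .
  qed
  have step: "supnorm n (\<epsilon> k) \<le> (1 + \<tau> * C) * supnorm n (\<epsilon> (k - 1))" if k: "1 \<le> k" "k \<le> N" for k
  proof -
    obtain i0 where i0: "1 \<le> i0" "i0 \<le> n" "\<bar>\<epsilon> k i0\<bar> = supnorm n (\<epsilon> k)"
      using supnorm_attained[OF n] by blast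
    have i02: "i0 \<le> 2 * M" using i0 by (simp add: n_def)
    show ?thesis
    proof (rule step_bound[OF n tau i0(1,2) _ gsum[OF i02] _ i0(3)])
      show "\<And>j. 1 \<le> j \<Longrightarrow> j \<le> n \<Longrightarrow> 0 \<le> g_coef a b \<gamma> M i0 j" using gnn by (simp add: n_def)
      show "d_coef a b \<gamma> M i0 \<le> C" using d_bound[OF ab M g i02] by (simp add: C_def)
      show "\<epsilon> k i0 + \<tau> / 2 * (d_coef a b \<gamma> M i0 * \<epsilon> k i0 - (\<Sum>j = 1..n. g_coef a b \<gamma> M i0 j * \<epsilon> k j)) =
            \<epsilon> (k - 1) i0 - \<tau> / 2 * (d_coef a b \<gamma> M i0 * \<epsilon> (k - 1) i0 - (\<Sum>j = 1..n. g_coef a b \<gamma> M i0 j * \<epsilon> (k - 1) j))"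
        using scheme[OF k i0(1), unfolded n_def[symmetric], OF i0(2)]
        unfolding sumA[OF i0(1,2)] \<tau>_def .
    qed
  qed
  have ind: "k \<le> N \<longrightarrow> supnorm n (\<epsilon> k) \<le> (1 + \<tau> * C)^k * supnorm n (\<epsilon> 0)" for k
  proof (induction k)
    case 0
    then show ?case by simp
  next
    case (Suc k)
    show ?case
    proof
      assume "Suc k \<le> N"
      then have "supnorm n (\<epsilon> (Suc k)) \<le> (1 + \<tau> * C) * supnorm n (\<epsilon> k)"
        using step[of "Suc k"] by simp
      also have "\<dots> \<le> (1 + \<tau> * C) * ((1 + \<tau> * C)^k * supnorm n (\<epsilon> 0))"
        using Suc \<open>Suc k \<le> N\<close> tau C by (intro mult_left_mono) auto
      finally show "supnorm n (\<epsilon> (Suc k)) \<le> (1 + \<tau> * C)^Suc k * supnorm n (\<epsilon> 0)"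
        by (simp add: algebra_simps)
    qed
  qed
  show ?thesis
  proof (intro allI impI)
    fix k assume kN: "k \<le> N"
    have "(1 + \<tau> * C)^k \<le> exp (\<tau> * C)^k"
      using tau C by (intro power_mono) (auto simp: exp_ge_add_one_self)
    also have "\<dots> = exp (real k * (\<tau> * C))" by (simp add: exp_of_nat_mult)
    also have "\<dots> \<le> exp (T * C)"
    proof -
      have "real k * \<tau> \<le> T"
      proof -
        have "real k * \<tau> \<le> real N * \<tau>" using kN tau by (intro mult_right_mono) auto
        also have "\<dots> = T" using assms(6) by (simp add: \<tau>_def)
        finally show ?thesis .
      qed
      then have "real k * \<tau> * C \<le> T * C" using C by (intro mult_right_mono) auto
      then show ?thesis by (simp add: mult.assoc)
    qed
    finally have "(1 + \<tau> * C)^k * supnorm n (\<epsilon> 0) \<le> exp (T * C) * supnorm n (\<epsilon> 0)"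
      using supnorm_nonneg[OF n] by (intro mult_right_mono) auto
    with ind[of k] kN show "supnorm (2 * M - 1) (\<epsilon> k)
           \<le> exp (T * (2 * (b - a) powr (1 - \<gamma>) / (1 - \<gamma>))) * supnorm (2 * M - 1) (\<epsilon> 0)"
      by (simp add: n_def C_def)
  qed
qed


end
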